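(* Let $n\ge3$, let $B$ be the ménage board and $\alpha=(\alpha_1,\dots,\alpha_\ell)$ a valid prefix with $1\le\ell<n$. Partition $[n]\setminus\{\alpha_1,\dots,\alpha_\ell\}$ into maximal sets $P_1,\dots,P_m$ of consecutive integers. Then $B_\alpha^c$ is the union of $m$ pairwise disjoint sub-boards, where the $t$-th consists of the (relabeled) squares of $B^c$ lying in columns of $P_t$ and rows $>\ell$; each of these sub-boards is staircase-shaped with exactly $\sum_{p\in P_t}c_p$ squares. Consequently the multiset of sizes of the disjoint staircase-shaped sub-boards of $B_\alpha^c$ is $\mathcal P_\alpha=\{\sum_{p\in P_t}c_p: 1\le t\le m\}$.
   Context: Ménage board $B=\{(i,j)\in[n]\times[n]: j\ne i,\ j+1\not\equiv i\pmod n\}$, with complement $B^c=\{(i,i):i\in[n]\}\cup\{(i+1,i):i\in[n-1]\}\cup\{(1,n)\}$; squares are (row, column). Valid prefix: prefix of the one-line notation of a ménage permutation ($\pi\in S_n$ with $\pi(i)\ne i$, $\pi(i)+1\not\equiv i\pmod n$). Derived board $B_\alpha$: delete rows $1,\dots,\ell$ and columns $\alpha_1,\dots,\alpha_\ell$ of $B$, relabel the rest increasingly as $1,\dots,n-\ell$; $B_\alpha^c$ = complement of $B_\alpha$ in $[n-\ell]\times[n-\ell]$ (equivalently the image of $B^c$ under the same deletion and relabeling). For $i\notin\alpha$: $c_i=0$ if $i<\ell$, $c_i=1$ if $i=\ell$ or $i=n$, $c_i=2$ if $\ell<i<n$. Disjoint sub-boards: no square of one shares a row or column with a square of another. Staircase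 shapes for $m\ge1$: $\mathcal O_{2m-1}=\{(i,i):i\in[m]\}\cup\{(i,i+1):i\in[m-1]\}$, $\mathcal O_{2m-1}^\intercal=\{(i,i):i\in[m]\}\cup\{(i+1,i):i\in[m-1]\}$, $\mathcal E_{2m-2}=\{(i,i):i\in[m-1]\}\cup\{(i+1,i):i\in[m-1]\}$, $\mathcal E_{2m-2}^\intercal=\{(i,i):i\in[m-1]\}\cup\{(i,i+1):i\in[m-1]\}$; a board is staircase-shaped if, after relabeling its occupied rows and columns increasingly as $1,2,\dots$, it equals one of these (empty board = $\mathcal E_0$). *)

theory Defs
  imports "HOL-Combinatorics.Permutations" "HOL-Library.Multiset"
begin

type_synonym board = "(nat \<times> nat) set"

text \<open>Menage board on [n] x [n]; squares are (row, column).\<close>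
definition menage_board :: "nat \<Rightarrow> board" where
  "menage_board n = {(i, j). i \<in> {1..n} \<and> j \<in> {1..n} \<and> j \<noteq> i \<and> (j + 1) mod n \<noteq> i mod n}"

definition menage_board_compl :: "nat \<Rightarrow> board" where
  "menage_board_compl n = ({1..n} \<times> {1..n}) - menage_board n"

definition menage_perm :: "nat \<Rightarrow> (nat \<Rightarrow> nat) \<Rightarrow> bool" where
  "menage_perm n \<pi> \<longleftrightarrow> \<pi> permutes {1..n} \<and>
     (\<forall>i\<in>{1..n}. \<pi> i \<noteq> i \<and> (\<pi> i + 1) mod n \<noteq> i mod n)"

definition valid_prefix :: "nat \<Rightarrow> nat list \<Rightarrow> bool" where
  "valid_prefix n \<alpha> \<longleftrightarrow> (\<exists>\<pi>. menage_perm n \<pi> \<and> \<alpha> = map \<pi> [1..<length \<alpha> + 1])"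

text \<open>Relabeling after deleting rows 1..l and the columns in alpha.\<close>
definition relabel :: "nat list \<Rightarrow> nat \<times> nat \<Rightarrow> nat \<times> nat" where
  "relabel \<alpha> sq = (fst sq - length \<alpha>, snd sq - card {a \<in> set \<alpha>. a < snd sq})"

definition derived_board :: "nat \<Rightarrow> nat list \<Rightarrow> board" where
  "derived_board n \<alpha> = relabel \<alpha> ` {(i, j) \<in> menage_board n. i > length \<alpha> \<and> j \<notin> set \<alpha>}"

definition derived_board_compl :: "nat \<Rightarrow> nat list \<Rightarrow> board" where
  "derived_board_compl n \<alpha> =
     ({1..n - length \<alpha>} \<times> {1..n - length \<alpha>}) - derived_board n \<alpha>"

definition cval :: "nat \<Rightarrow> nat \<Rightarrow> nat \<Rightarrow> nat" where
  "cval n l i = (if i < l then 0 else if i = l \<or> i = n then 1 else 2)"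

definition runs :: "nat \<Rightarrow> nat list \<Rightarrow> nat set set" where
  "runs n \<alpha> = {{a..b} | a b. 1 \<le> a \<and> a \<le> b \<and> b \<le> n \<and> {a..b} \<inter> set \<alpha> = {}
       \<and> (a = 1 \<or> a - 1 \<in> set \<alpha>) \<and> (b = n \<or> b + 1 \<in> set \<alpha>)}"

definition sub_board :: "nat \<Rightarrow> nat list \<Rightarrow> nat set \<Rightarrow> board" where
  "sub_board n \<alpha> P = relabel \<alpha> ` {(i, j) \<in> menage_board_compl n. i > length \<alpha> \<and> j \<in> P}"

definition disjoint_boards :: "board \<Rightarrow> board \<Rightarrow> bool" where
  "disjoint_boards X Y \<longleftrightarrow> (\<forall>s\<in>X. \<forall>t\<in>Y. fst s \<noteq> fst t \<and> snd s \<noteq> snd t)"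

definition O_shape :: "nat \<Rightarrow> board" where
  "O_shape m = {(i, i) | i. i \<in> {1..m}} \<union> {(i, i + 1) | i. i \<in> {1..m - 1}}"
definition OT_shape :: "nat \<Rightarrow> board" where
  "OT_shape m = {(i, i) | i. i \<in> {1..m}} \<union> {(i + 1, i) | i. i \<in> {1..m - 1}}"
definition E_shape :: "nat \<Rightarrow> board" where
  "E_shape m = {(i, i) | i. i \<in> {1..m - 1}} \<union> {(i + 1, i) | i. i \<in> {1..m - 1}}"
definition ET_shape :: "nat \<Rightarrow> board" where
  "ET_shape m = {(i, i) | i. i \<in> {1..m - 1}} \<union> {(i, i + 1) | i. i \<in> {1..m - 1}}"

definition rank_in :: "nat set \<Rightarrow> nat \<Rightarrow> nat" where
  "rank_in S x = card {y \<in> S. y < x} + 1"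

definition normalize :: "board \<Rightarrow> board" where
  "normalize X = (\<lambda>(i, j). (rank_in (fst ` X) i, rank_in (snd ` X) j)) ` X"

definition staircase_shaped :: "board \<Rightarrow> bool" where
  "staircase_shaped X \<longleftrightarrow> (\<exists>m\<ge>1. normalize X = O_shape m \<or> normalize X = OT_shape m
       \<or> normalize X = E_shape m \<or> normalize X = ET_shape m)"

end

theory Submission
  imports Defs
begin


lemma compl_char:
  assumes "n \<ge> 3"
  shows "(i,j) \<in> menage_board_compl n \<longleftrightarrow> i \<in> {1..n} \<and> j \<in> {1..n} \<and> (i = j \<or> i = j+1 \<or> (i = 1 \<and> j = n))"
proof -
  have key: "(j+1) mod n = i mod n \<longleftrightarrow> (i = j+1 \<or> (i = 1 \<and> j = n))" if "i \<in> {1..n}" "j \<in> {1..n}"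
  proof -
    have a: "i mod n = (if i = n then 0 else i)" using that by auto
    have b: "(j+1) mod n = (if j+1 = n then 0 else if j = n then 1 else j+1)"
      using that assms by (auto simp: mod_if)
    show ?thesis unfolding a b using that assms by auto
  qed
  show ?thesis unfolding menage_board_compl_def menage_board_def using key by auto
qed

lemma normalize_map:
  assumes "strict_mono_on (fst ` X) f" "strict_mono_on (snd ` X) g"
  shows "normalize (map_prod f g ` X) = normalize X"
proof -
  have r: "rank_in (h ` S) (h x) = rank_in S x" if "strict_mono_on S h" "x \<in> S" for h :: "nat \<Rightarrow> nat" and S x
  proof -
    have inj: "inj_on h S" using that(1) strict_mono_on_imp_inj_on by blast
    have "{y \<in> h ` S. y < h x} = h ` {y \<in> S. h y < h x}" by auto
    also have "{y \<in> S. h y < h x} = {y \<in> S. y < x}"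
      using that by (auto simp: strict_mono_on_less)
    finally have "card {y \<in> h ` S. y < h x} = card (h ` {y \<in> S. y < x})" by simp
    also have "\<dots> = card {y \<in> S. y < x}" by (rule card_image) (auto intro: inj_on_subset[OF inj])
    finally show ?thesis unfolding rank_in_def by simp
  qed
  have e1: "fst ` map_prod f g ` X = f ` fst ` X" "snd ` map_prod f g ` X = g ` snd ` X"
    by (force simp: image_image)+
  have e3: "(\<lambda>x. f (fst x)) ` X = f ` fst ` X" "(\<lambda>x. g (snd x)) ` X = g ` snd ` X"
    by (simp_all add: image_image)
  show ?thesis unfolding normalize_def e1 image_image
    apply (rule image_cong[OF refl])
    apply clarify
    apply (simp only: e3 map_prod_simp fst_conv snd_conv case_prod_conv)
    apply (simp)
    apply (rule conjI)
     apply (subst e3(1), rule r[OF assms(1)], force)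
    apply (subst e3(2), rule r[OF assms(2)], force)
    done
qed


lemma rank_in_interval: "x \<in> {1..p} \<Longrightarrow> rank_in {1..p} x = x"
proof -
  assume x: "x \<in> {1..p}"
  have "{y \<in> {1..p}. y < x} = {1..<x}" using x by auto
  then show ?thesis using x unfolding rank_in_def by simp
qed

lemma normalize_id:
  assumes "fst ` Y = {1..p}" "snd ` Y = {1..q}"
  shows "normalize Y = Y"
proof -
  have "normalize Y = (\<lambda>x. x) ` Y" unfolding normalize_def assms
  proof (rule image_cong[OF refl])
    fix x assume x: "x \<in> Y"
    obtain a b where ab: "x = (a, b)" by force
    have "a \<in> {1..p}" using x ab assms(1) by force
    moreover have "b \<in> {1..q}" using x ab assms(2) by force
    ultimately have "rank_in {1..p} a = a" "rank_in {1..q} b = b" by (simp_all only: rank_in_interval)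
    then show "(case x of (i, j) \<Rightarrow> (rank_in {1..p} i, rank_in {1..q} j)) = x"
      using ab by simp
  qed
  then show ?thesis by simp
qed

locale L =
  fixes n :: nat and \<alpha> :: "nat list"
  assumes n3: "n \<ge> 3" and dist: "distinct \<alpha>" and sub: "set \<alpha> \<subseteq> {1..n}"
    and l1: "1 \<le> length \<alpha>" and ln: "length \<alpha> < n"
begin

definition col :: "nat \<Rightarrow> nat" where "col j = j - card {a \<in> set \<alpha>. a < j}"

lemma relabel_eq: "relabel \<alpha> (i, j) = (i - length \<alpha>, col j)"
  unfolding relabel_def col_def by simp

lemma relabel_fun: "relabel \<alpha> = map_prod (\<lambda>i. i - length \<alpha>) col"
  by (rule ext) (auto simp: relabel_eq)

lemma cnt_le: "card {a \<in> set \<alpha>. a < j} \<le> j - 1"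
proof -
  have "{a \<in> set \<alpha>. a < j} \<subseteq> {1..<j}" using sub by auto
  then have "card {a \<in> set \<alpha>. a < j} \<le> card {1..<j}" by (intro card_mono) auto
  then show ?thesis by simp
qed

lemma col_mono:
  assumes "j < j'" "j \<notin> set \<alpha>" "j' \<notin> set \<alpha>"
  shows "col j < col j'"
proof -
  have "{a \<in> set \<alpha>. a < j'} \<subseteq> {a \<in> set \<alpha>. a < j} \<union> {j<..<j'}"
  proof
    fix x assume x: "x \<in> {a \<in> set \<alpha>. a < j'}"
    then have "x \<noteq> j" using assms(2) by auto
    then show "x \<in> {a \<in> set \<alpha>. a < j} \<union> {j<..<j'}" using x by auto
  qed
  then have "card {a \<in> set \<alpha>. a < j'} \<le> card ({a \<in> set \<alpha>. a < j} \<union> {j<..<j'})"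
    by (intro card_mono) auto
  also have "\<dots> \<le> card {a \<in> set \<alpha>. a < j} + card {j<..<j'}" by (rule card_Un_le)
  finally have "card {a \<in> set \<alpha>. a < j'} \<le> card {a \<in> set \<alpha>. a < j} + (j' - j - 1)" by simp
  moreover have "card {a \<in> set \<alpha>. a < j} \<le> j - 1" "card {a \<in> set \<alpha>. a < j'} \<le> j' - 1"
    by (rule cnt_le)+
  ultimately show ?thesis unfolding col_def using assms(1) by linarith
qed

lemma col_smono: "strict_mono_on (- set \<alpha>) col"
  by (rule strict_mono_onI) (rule col_mono, simp_all)

lemma card_A: "card (set \<alpha>) = length \<alpha>" using dist by (simp add: distinct_card)

lemma col_range:
  assumes "j \<in> {1..n} - set \<alpha>"
  shows "col j \<in> {1..n - length \<alpha>}"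
proof -
  have c: "card {a \<in> set \<alpha>. a < j} \<le> j - 1" by (rule cnt_le)
  have split: "set \<alpha> \<subseteq> {a \<in> set \<alpha>. a < j} \<union> {a \<in> set \<alpha>. a > j}"
  proof
    fix x assume x: "x \<in> set \<alpha>"
    then have "x \<noteq> j" using assms by auto
    then show "x \<in> {a \<in> set \<alpha>. a < j} \<union> {a \<in> set \<alpha>. a > j}" using x by auto
  qed
  have "card (set \<alpha>) \<le> card ({a \<in> set \<alpha>. a < j} \<union> {a \<in> set \<alpha>. a > j})"
    by (rule card_mono[OF _ split]) simp
  also have "\<dots> \<le> card {a \<in> set \<alpha>. a < j} + card {a \<in> set \<alpha>. a > j}" by (rule card_Un_le)
  finally have "length \<alpha> \<le> card {a \<in> set \<alpha>. a < j} + card {a \<in> set \<alpha>. a > j}" using card_A by simp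
  moreover have "card {a \<in> set \<alpha>. a > j} \<le> card {j<..n}"
    using sub by (intro card_mono) auto
  ultimately have "length \<alpha> \<le> card {a \<in> set \<alpha>. a < j} + (n - j)" by simp
  moreover have "1 \<le> j" "j \<le> n" using assms by auto
  ultimately show ?thesis using c unfolding col_def atLeastAtMost_iff by linarith
qed

lemma col_bij: "bij_betw col ({1..n} - set \<alpha>) {1..n - length \<alpha>}"
proof -
  have inj: "inj_on col ({1..n} - set \<alpha>)"
    using strict_mono_on_imp_inj_on[OF col_smono] by (rule inj_on_subset) auto
  have "col ` ({1..n} - set \<alpha>) \<subseteq> {1..n - length \<alpha>}" using col_range by auto
  moreover have "card (col ` ({1..n} - set \<alpha>)) = card {1..n - length \<alpha>}"
    using card_image[OF inj] card_Diff_subset[OF _ sub] card_A by simp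
  ultimately have "col ` ({1..n} - set \<alpha>) = {1..n - length \<alpha>}"
    by (intro card_subset_eq) auto
  then show ?thesis using inj unfolding bij_betw_def by simp
qed

lemma row_bij: "bij_betw (\<lambda>i. i - length \<alpha>) {length \<alpha><..n} {1..n - length \<alpha>}"
proof -
  have "inj_on (\<lambda>i. i - length \<alpha>) {length \<alpha><..n}" by (auto simp: inj_on_def)
  moreover have "(\<lambda>i. i - length \<alpha>) ` {length \<alpha><..n} = {1..n - length \<alpha>}"
  proof
    show "(\<lambda>i. i - length \<alpha>) ` {length \<alpha><..n} \<subseteq> {1..n - length \<alpha>}" by auto
    show "{1..n - length \<alpha>} \<subseteq> (\<lambda>i. i - length \<alpha>) ` {length \<alpha><..n}"
    proof
      fix x assume "x \<in> {1..n - length \<alpha>}"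
      then show "x \<in> (\<lambda>i. i - length \<alpha>) ` {length \<alpha><..n}"
        by (intro image_eqI[of _ _ "x + length \<alpha>"]) auto
    qed
  qed
  ultimately show ?thesis unfolding bij_betw_def by simp
qed

lemma relabel_bij: "bij_betw (relabel \<alpha>) ({length \<alpha><..n} \<times> ({1..n} - set \<alpha>)) ({1..n - length \<alpha>} \<times> {1..n - length \<alpha>})"
  unfolding relabel_fun by (rule bij_betw_map_prod[OF row_bij col_bij])


end



context L begin

definition run :: "nat \<Rightarrow> nat \<Rightarrow> bool" where
  "run a b \<longleftrightarrow> 1 \<le> a \<and> a \<le> b \<and> b \<le> n \<and> {a..b} \<inter> set \<alpha> = {}
       \<and> (a = 1 \<or> a - 1 \<in> set \<alpha>) \<and> (b = n \<or> b + 1 \<in> set \<alpha>)"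

lemma runs_iff: "P \<in> runs n \<alpha> \<longleftrightarrow> (\<exists>a b. P = {a..b} \<and> run a b)"
  unfolding runs_def run_def by blast

lemma runs_sub: "P \<in> runs n \<alpha> \<Longrightarrow> P \<subseteq> {1..n} - set \<alpha>"
  unfolding runs_iff run_def by auto

lemma runs_cover: "(\<Union>(runs n \<alpha>)) = {1..n} - set \<alpha>"
proof
  show "\<Union>(runs n \<alpha>) \<subseteq> {1..n} - set \<alpha>" using runs_sub by blast
  show "{1..n} - set \<alpha> \<subseteq> \<Union>(runs n \<alpha>)"
  proof
    fix j assume j: "j \<in> {1..n} - set \<alpha>"
    define SA where "SA = {x \<in> {1..j}. {x..j} \<inter> set \<alpha> = {}}"
    define SB where "SB = {x \<in> {j..n}. {j..x} \<inter> set \<alpha> = {}}"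
    have jA: "j \<in> SA" "j \<in> SB" using j unfolding SA_def SB_def by auto
    have fA: "finite SA" "finite SB" unfolding SA_def SB_def by auto
    define a where "a = Min SA"
    define b where "b = Max SB"
    have aS: "a \<in> SA" unfolding a_def using fA jA Min_in by blast
    have bS: "b \<in> SB" unfolding b_def using fA jA Max_in by blast
    have amin: "\<And>x. x \<in> SA \<Longrightarrow> a \<le> x" unfolding a_def using fA by simp
    have bmax: "\<And>x. x \<in> SB \<Longrightarrow> x \<le> b" unfolding b_def using fA by simp
    have a1: "a = 1 \<or> a - 1 \<in> set \<alpha>"
    proof (rule ccontr)
      assume "\<not> ?thesis"
      then have "a \<ge> 2" "a - 1 \<notin> set \<alpha>" using aS unfolding SA_def by auto
      moreover have "{a - 1..j} = insert (a - 1) {a..j}" using \<open>a \<ge> 2\<close> aS unfolding SA_def by auto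
      ultimately have "a - 1 \<in> SA" using aS unfolding SA_def by auto
      then show False using amin[of "a - 1"] \<open>a \<ge> 2\<close> by simp
    qed
    have b1: "b = n \<or> b + 1 \<in> set \<alpha>"
    proof (rule ccontr)
      assume "\<not> ?thesis"
      then have "b < n" "b + 1 \<notin> set \<alpha>" using bS unfolding SB_def by auto
      moreover have "{j..b + 1} = insert (b + 1) {j..b}" using bS unfolding SB_def by auto
      ultimately have "b + 1 \<in> SB" using bS unfolding SB_def by auto
      then show False using bmax[of "b + 1"] by simp
    qed
    have "{a..b} \<inter> set \<alpha> = {}"
    proof -
      have "{a..b} \<subseteq> {a..j} \<union> {j..b}" by auto
      moreover have "{a..j} \<inter> set \<alpha> = {}" "{j..b} \<inter> set \<alpha> = {}" using aS bS unfolding SA_def SB_def by auto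
      ultimately show ?thesis by blast
    qed
    then have "run a b" unfolding run_def using aS bS a1 b1 unfolding SA_def SB_def by auto
    moreover have "j \<in> {a..b}" using aS bS unfolding SA_def SB_def by auto
    ultimately have "{a..b} \<in> runs n \<alpha>" "j \<in> {a..b}" unfolding runs_iff by blast+
    then show "j \<in> \<Union>(runs n \<alpha>)" by blast
  qed
qed

lemma runs_sep:
  assumes "run a b" "run c d" "{a..b} \<noteq> {c..d}" "a \<le> c"
  shows "b + 2 \<le> c"
proof (cases "c \<le> b")
  case True
  have "c = a"
  proof (rule ccontr)
    assume "c \<noteq> a"
    then have "c - 1 \<in> set \<alpha>" "c - 1 \<in> {a..b}" using assms True unfolding run_def by auto
    then show False using assms unfolding run_def by blast
  qed
  moreover have "b = d"
  proof (rule ccontr)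
    assume "b \<noteq> d"
    then consider "b < d" | "d < b" by linarith
    then show False
    proof cases
      case 1
      then have "b + 1 \<in> set \<alpha>" "b + 1 \<in> {c..d}" using assms True unfolding run_def by auto
      then show False using assms unfolding run_def by blast
    next
      case 2
      then have "d + 1 \<in> set \<alpha>" "d + 1 \<in> {a..b}" using assms True \<open>c = a\<close> unfolding run_def by auto
      then show False using assms unfolding run_def by blast
    qed
  qed
  ultimately show ?thesis using assms by simp
next
  case False
  have c1: "c \<ge> 1" "c \<noteq> 1" using assms(2) assms(1) assms(4) False unfolding run_def by auto
  then have "c - 1 \<in> set \<alpha>" using assms(2) unfolding run_def by auto
  moreover have "b \<notin> set \<alpha>" using assms(1) unfolding run_def by auto
  ultimately have "c - 1 \<noteq> b" by auto
  then show ?thesis using False c1 by linarith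
qed

definition XS :: "nat set \<Rightarrow> (nat \<times> nat) set" where
  "XS P = {(i, j). j \<in> P \<and> length \<alpha> < i \<and> i \<le> n \<and> (i = j \<or> i = j + 1)}"

lemma XS_eq: assumes "P \<subseteq> {1..n}" shows "{(i, j) \<in> menage_board_compl n. i > length \<alpha> \<and> j \<in> P} = XS P"
proof (rule set_eqI)
  fix x :: "nat \<times> nat"
  obtain i j where x: "x = (i, j)" by force
  have "(i, j) \<in> menage_board_compl n \<and> i > length \<alpha> \<and> j \<in> P \<longleftrightarrow> (i, j) \<in> XS P"
  proof
    assume h: "(i, j) \<in> menage_board_compl n \<and> i > length \<alpha> \<and> j \<in> P"
    then have "i \<in> {1..n} \<and> j \<in> {1..n} \<and> (i = j \<or> i = j+1 \<or> (i = 1 \<and> j = n))" using compl_char[OF n3] by blast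
    then show "(i, j) \<in> XS P" using h l1 unfolding XS_def by auto
  next
    assume h: "(i, j) \<in> XS P"
    then have "j \<in> {1..n}" using assms unfolding XS_def by auto
    then have "(i, j) \<in> menage_board_compl n" using h compl_char[OF n3] unfolding XS_def by auto
    then show "(i, j) \<in> menage_board_compl n \<and> i > length \<alpha> \<and> j \<in> P" using h unfolding XS_def by auto
  qed
  then show "x \<in> {(i, j) \<in> menage_board_compl n. i > length \<alpha> \<and> j \<in> P} \<longleftrightarrow> x \<in> XS P" using x by simp
qed

lemma sub_board_eq: "P \<in> runs n \<alpha> \<Longrightarrow> sub_board n \<alpha> P = relabel \<alpha> ` XS P"
  unfolding sub_board_def using XS_eq runs_sub by blast

lemma part1: "derived_board_compl n \<alpha> = (\<Union>P\<in>runs n \<alpha>. sub_board n \<alpha> P)"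
proof -
  define S where "S = {length \<alpha><..n} \<times> ({1..n} - set \<alpha>)"
  have bij: "bij_betw (relabel \<alpha>) S ({1..n - length \<alpha>} \<times> {1..n - length \<alpha>})"
    unfolding S_def by (rule relabel_bij)
  have d: "derived_board n \<alpha> = relabel \<alpha> ` (S \<inter> menage_board n)"
    unfolding derived_board_def S_def menage_board_def by (rule arg_cong[where f="image _"]) auto
  have "(\<Union>P\<in>runs n \<alpha>. sub_board n \<alpha> P) = relabel \<alpha> ` (\<Union>P\<in>runs n \<alpha>. {(i, j) \<in> menage_board_compl n. i > length \<alpha> \<and> j \<in> P})"
    unfolding sub_board_def by blast
  also have "(\<Union>P\<in>runs n \<alpha>. {(i, j) \<in> menage_board_compl n. i > length \<alpha> \<and> j \<in> P}) = S - menage_board n"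
  proof -
    have "(\<Union>P\<in>runs n \<alpha>. {(i, j) \<in> menage_board_compl n. i > length \<alpha> \<and> j \<in> P})
        = {(i, j) \<in> menage_board_compl n. i > length \<alpha> \<and> j \<in> \<Union>(runs n \<alpha>)}" by blast
    also have "\<dots> = S - menage_board n" unfolding runs_cover S_def menage_board_compl_def by auto
    finally show ?thesis .
  qed
  finally have u: "(\<Union>P\<in>runs n \<alpha>. sub_board n \<alpha> P) = relabel \<alpha> ` (S - menage_board n)" .
  have "relabel \<alpha> ` (S - menage_board n) = relabel \<alpha> ` (S - (S \<inter> menage_board n))" by (rule arg_cong[where f="image _"]) blast
  also have "\<dots> = relabel \<alpha> ` S - relabel \<alpha> ` (S \<inter> menage_board n)"
    using bij unfolding bij_betw_def by (intro inj_on_image_set_diff) auto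
  finally show ?thesis unfolding derived_board_compl_def d u using bij unfolding bij_betw_def by simp
qed

end



lemma img_help:
  assumes "S \<subseteq> {1..p} \<times> {1..q}"
    and "\<And>x. x \<in> {1..p} \<Longrightarrow> \<exists>y. (x, y) \<in> S"
    and "\<And>y. y \<in> {1..q} \<Longrightarrow> \<exists>x. (x, y) \<in> S"
  shows "fst ` S = {1..p} \<and> snd ` S = {1..q}"
proof (intro conjI)
  show "fst ` S = {1..p}"
  proof
    show "fst ` S \<subseteq> {1..p}" using assms(1) by auto
    show "{1..p} \<subseteq> fst ` S"
    proof
      fix x assume "x \<in> {1..p}"
      then obtain y where "(x, y) \<in> S" using assms(2) by blast
      then show "x \<in> fst ` S" by (metis fst_conv image_eqI)
    qed
  qed
  show "snd ` S = {1..q}"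
  proof
    show "snd ` S \<subseteq> {1..q}" using assms(1) by auto
    show "{1..q} \<subseteq> snd ` S"
    proof
      fix y assume "y \<in> {1..q}"
      then obtain x where "(x, y) \<in> S" using assms(3) by blast
      then show "y \<in> snd ` S" by (metis snd_conv image_eqI)
    qed
  qed
qed

lemma O_img: assumes "m \<ge> 1" shows "fst ` O_shape m = {1..m} \<and> snd ` O_shape m = {1..m}"
proof (rule img_help)
  show "O_shape m \<subseteq> {1..m} \<times> {1..m}" unfolding O_shape_def by auto
  show "\<exists>y. (x, y) \<in> O_shape m" if "x \<in> {1..m}" for x
    using that unfolding O_shape_def by blast
  show "\<exists>x. (x, y) \<in> O_shape m" if "y \<in> {1..m}" for y
    using that unfolding O_shape_def by blast
qed

lemma OT_img: assumes "m \<ge> 1" shows "fst ` OT_shape m = {1..m} \<and> snd ` OT_shape m = {1..m}"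
proof (rule img_help)
  show "OT_shape m \<subseteq> {1..m} \<times> {1..m}" unfolding OT_shape_def by auto
  show "\<exists>y. (x, y) \<in> OT_shape m" if "x \<in> {1..m}" for x
    using that unfolding OT_shape_def by blast
  show "\<exists>x. (x, y) \<in> OT_shape m" if "y \<in> {1..m}" for y
    using that unfolding OT_shape_def by blast
qed

lemma E_img: assumes "m \<ge> 2" shows "fst ` E_shape m = {1..m} \<and> snd ` E_shape m = {1..m-1}"
proof (rule img_help)
  show "E_shape m \<subseteq> {1..m} \<times> {1..m-1}" unfolding E_shape_def by auto
  show "\<exists>y. (x, y) \<in> E_shape m" if "x \<in> {1..m}" for x
  proof (cases "x \<le> m - 1")
    case True
    then have "x \<in> {1..m-1}" using that by auto
    then have "(x, x) \<in> E_shape m" unfolding E_shape_def by blast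
    then show ?thesis by blast
  next
    case False
    then have "x = (m - 1) + 1" "m - 1 \<in> {1..m-1}" using that assms by auto
    then have "(x, m - 1) \<in> E_shape m" unfolding E_shape_def by blast
    then show ?thesis by blast
  qed
  show "\<exists>x. (x, y) \<in> E_shape m" if "y \<in> {1..m-1}" for y
    using that unfolding E_shape_def by blast
qed

lemma ET_img: assumes "m \<ge> 2" shows "fst ` ET_shape m = {1..m-1} \<and> snd ` ET_shape m = {1..m}"
proof (rule img_help)
  show "ET_shape m \<subseteq> {1..m-1} \<times> {1..m}" unfolding ET_shape_def by auto
  show "\<exists>y. (x, y) \<in> ET_shape m" if "x \<in> {1..m-1}" for x
    using that unfolding ET_shape_def by blast
  show "\<exists>x. (x, y) \<in> ET_shape m" if "y \<in> {1..m}" for y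
  proof (cases "y \<le> m - 1")
    case True
    then have "y \<in> {1..m-1}" using that by auto
    then have "(y, y) \<in> ET_shape m" unfolding ET_shape_def by blast
    then show ?thesis by blast
  next
    case False
    then have "y = (m - 1) + 1" "m - 1 \<in> {1..m-1}" using that assms by auto
    then have "(m - 1, y) \<in> ET_shape m" unfolding ET_shape_def by blast
    then show ?thesis by blast
  qed
qed


lemma in_imgI: "(k1, k2) \<in> Sh \<Longrightarrow> i = f k1 \<Longrightarrow> j = g k2 \<Longrightarrow> (i, j) \<in> map_prod f g ` Sh"
  by force

lemma normalize_shift:
  assumes "fst ` Sh = {1..p} \<and> snd ` Sh = {1..q}"
  shows "normalize (map_prod (\<lambda>k. k + s) (\<lambda>k. k + t) ` Sh) = Sh"
proof -
  have "normalize (map_prod (\<lambda>k. k + s) (\<lambda>k. k + t) ` Sh) = normalize Sh"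
    by (rule normalize_map) (auto intro: strict_mono_onI)
  also have "\<dots> = Sh" using assms by (intro normalize_id) auto
  finally show ?thesis .
qed

context L begin

lemma XS_sub: "P \<subseteq> {1..n} - set \<alpha> \<Longrightarrow> XS P \<subseteq> {length \<alpha><..n} \<times> ({1..n} - set \<alpha>)"
  unfolding XS_def by auto

lemma normalize_relabel:
  assumes "X \<subseteq> {length \<alpha><..n} \<times> ({1..n} - set \<alpha>)"
  shows "normalize (relabel \<alpha> ` X) = normalize X"
  unfolding relabel_fun
proof (rule normalize_map)
  show "strict_mono_on (fst ` X) (\<lambda>i. i - length \<alpha>)"
  proof (rule strict_mono_onI)
    fix r s assume "r \<in> fst ` X" "s \<in> fst ` X" "r < s"
    moreover have "r > length \<alpha>" using assms \<open>r \<in> fst ` X\<close> by auto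
    ultimately show "r - length \<alpha> < s - length \<alpha>" by simp
  qed
  show "strict_mono_on (snd ` X) col"
  proof (rule strict_mono_onI)
    fix r s assume "r \<in> snd ` X" "s \<in> snd ` X" "r < s"
    moreover have "r \<notin> set \<alpha>" "s \<notin> set \<alpha>" using assms \<open>r \<in> snd ` X\<close> \<open>s \<in> snd ` X\<close> by auto
    ultimately show "col r < col s" by (intro col_mono)
  qed
qed

lemma XS_memE:
  assumes "x \<in> XS P"
  obtains i j where "x = (i, j)" "j \<in> P" "length \<alpha> < i" "i \<le> n" "i = j \<or> i = j + 1"
  using assms unfolding XS_def by auto

lemma case2:
  assumes "a \<le> length \<alpha>" "length \<alpha> \<le> b" "b < n"
  shows "XS {a..b} = map_prod (\<lambda>k. k + length \<alpha>) (\<lambda>k. k + (length \<alpha> - 1)) ` O_shape (b - length \<alpha> + 1)"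
    (is "_ = ?R")
proof (rule set_eqI, rule iffI)
  fix x assume "x \<in> XS {a..b}"
  then obtain i j where x: "x = (i, j)" "j \<in> {a..b}" "length \<alpha> < i" "i \<le> n" "i = j \<or> i = j + 1"
    by (rule XS_memE)
  show "x \<in> ?R"
  proof (cases "i = j")
    case True
    then have "j - length \<alpha> \<in> {1..b - length \<alpha> + 1 - 1}" using x by auto
    then have "(j - length \<alpha>, j - length \<alpha> + 1) \<in> O_shape (b - length \<alpha> + 1)" unfolding O_shape_def by blast
    then show ?thesis unfolding x(1) by (rule in_imgI) (use True x l1 in auto)
  next
    case False
    then have "i = j + 1" using x by auto
    then have "j - length \<alpha> + 1 \<in> {1..b - length \<alpha> + 1}" using x by auto
    then have "(j - length \<alpha> + 1, j - length \<alpha> + 1) \<in> O_shape (b - length \<alpha> + 1)" unfolding O_shape_def by blast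
    then show ?thesis unfolding x(1) by (rule in_imgI) (use \<open>i = j + 1\<close> x l1 in auto)
  qed
next
  fix x assume "x \<in> ?R"
  then show "x \<in> XS {a..b}" using assms l1 unfolding O_shape_def XS_def by auto
qed

lemma case3:
  assumes "a \<le> length \<alpha>" "b = n"
  shows "XS {a..b} = map_prod (\<lambda>k. k + length \<alpha>) (\<lambda>k. k + (length \<alpha> - 1)) ` ET_shape (n - length \<alpha> + 1)"
    (is "_ = ?R")
proof (rule set_eqI, rule iffI)
  fix x assume "x \<in> XS {a..b}"
  then obtain i j where x: "x = (i, j)" "j \<in> {a..b}" "length \<alpha> < i" "i \<le> n" "i = j \<or> i = j + 1"
    by (rule XS_memE)
  show "x \<in> ?R"
  proof (cases "i = j")
    case True
    then have "j - length \<alpha> \<in> {1..n - length \<alpha> + 1 - 1}" using x by auto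
    then have "(j - length \<alpha>, j - length \<alpha> + 1) \<in> ET_shape (n - length \<alpha> + 1)" unfolding ET_shape_def by blast
    then show ?thesis unfolding x(1) by (rule in_imgI) (use True x l1 in auto)
  next
    case False
    then have "i = j + 1" using x by auto
    then have "j - length \<alpha> + 1 \<in> {1..n - length \<alpha> + 1 - 1}" using x by auto
    then have "(j - length \<alpha> + 1, j - length \<alpha> + 1) \<in> ET_shape (n - length \<alpha> + 1)" unfolding ET_shape_def by blast
    then show ?thesis unfolding x(1) by (rule in_imgI) (use \<open>i = j + 1\<close> x l1 in auto)
  qed
next
  fix x assume "x \<in> ?R"
  then show "x \<in> XS {a..b}" using assms l1 ln unfolding ET_shape_def XS_def by auto
qed

lemma case4:
  assumes "length \<alpha> < a" "a \<le> b" "b < n"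
  shows "XS {a..b} = map_prod (\<lambda>k. k + (a - 1)) (\<lambda>k. k + (a - 1)) ` E_shape (b - a + 2)"
    (is "_ = ?R")
proof (rule set_eqI, rule iffI)
  fix x assume "x \<in> XS {a..b}"
  then obtain i j where x: "x = (i, j)" "j \<in> {a..b}" "length \<alpha> < i" "i \<le> n" "i = j \<or> i = j + 1"
    by (rule XS_memE)
  have "j - (a - 1) \<in> {1..b - a + 2 - 1}" using x assms by auto
  show "x \<in> ?R"
  proof (cases "i = j")
    case True
    have "(j - (a - 1), j - (a - 1)) \<in> E_shape (b - a + 2)" unfolding E_shape_def using \<open>j - (a - 1) \<in> _\<close> by blast
    then show ?thesis unfolding x(1) by (rule in_imgI) (use True x assms in auto)
  next
    case False
    then have "i = j + 1" using x by auto
    have "(j - (a - 1) + 1, j - (a - 1)) \<in> E_shape (b - a + 2)" unfolding E_shape_def using \<open>j - (a - 1) \<in> _\<close> by blast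
    then show ?thesis unfolding x(1) by (rule in_imgI) (use \<open>i = j + 1\<close> x assms in auto)
  qed
next
  fix x assume "x \<in> ?R"
  then show "x \<in> XS {a..b}" using assms unfolding E_shape_def XS_def by auto
qed

lemma case5:
  assumes "length \<alpha> < a" "a \<le> b" "b = n"
  shows "XS {a..b} = map_prod (\<lambda>k. k + (a - 1)) (\<lambda>k. k + (a - 1)) ` OT_shape (n - a + 1)"
    (is "_ = ?R")
proof (rule set_eqI, rule iffI)
  fix x assume "x \<in> XS {a..b}"
  then obtain i j where x: "x = (i, j)" "j \<in> {a..b}" "length \<alpha> < i" "i \<le> n" "i = j \<or> i = j + 1"
    by (rule XS_memE)
  show "x \<in> ?R"
  proof (cases "i = j")
    case True
    have "j - (a - 1) \<in> {1..n - a + 1}" using x assms by auto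
    then have "(j - (a - 1), j - (a - 1)) \<in> OT_shape (n - a + 1)" unfolding OT_shape_def by blast
    then show ?thesis unfolding x(1) by (rule in_imgI) (use True x assms in auto)
  next
    case False
    then have "i = j + 1" using x by auto
    have "j - (a - 1) \<in> {1..n - a + 1 - 1}" using x assms \<open>i = j + 1\<close> by auto
    then have "(j - (a - 1) + 1, j - (a - 1)) \<in> OT_shape (n - a + 1)" unfolding OT_shape_def by blast
    then show ?thesis unfolding x(1) by (rule in_imgI) (use \<open>i = j + 1\<close> x assms in auto)
  qed
next
  fix x assume "x \<in> ?R"
  then show "x \<in> XS {a..b}" using assms unfolding OT_shape_def XS_def by auto
qed

lemma case1:
  assumes "b < length \<alpha>"
  shows "XS {a..b} = {}"
  using assms unfolding XS_def by auto


lemma run_sub: "run a b \<Longrightarrow> {a..b} \<subseteq> {1..n} - set \<alpha>"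
  unfolding run_def by auto

lemma run_in: "run a b \<Longrightarrow> {a..b} \<in> runs n \<alpha>"
  unfolding runs_iff by blast

lemma staircase_run:
  assumes r: "run a b"
  shows "staircase_shaped (sub_board n \<alpha> {a..b})"
proof -
  have ab: "1 \<le> a" "a \<le> b" "b \<le> n" using r unfolding run_def by auto
  have N: "normalize (sub_board n \<alpha> {a..b}) = normalize (XS {a..b})"
    unfolding sub_board_eq[OF run_in[OF r]] using XS_sub[OF run_sub[OF r]] by (rule normalize_relabel)
  consider "b < length \<alpha>" | "a \<le> length \<alpha>" "length \<alpha> \<le> b" "b < n" | "a \<le> length \<alpha>" "b = n"
    | "length \<alpha> < a" "b < n" | "length \<alpha> < a" "b = n" using ab by linarith
  then show ?thesis
  proof cases
    case 1
    have "normalize (XS {a..b}) = E_shape 1" unfolding case1[OF 1] normalize_def E_shape_def by simp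
    then show ?thesis unfolding staircase_shaped_def N by blast
  next
    case 2
    have "normalize (XS {a..b}) = O_shape (b - length \<alpha> + 1)"
      unfolding case2[OF 2] by (rule normalize_shift) (rule O_img, simp)
    then show ?thesis unfolding staircase_shaped_def N by (intro exI[of _ "b - length \<alpha> + 1"]) simp
  next
    case 3
    have "normalize (XS {a..b}) = ET_shape (n - length \<alpha> + 1)"
      unfolding case3[OF 3] by (rule normalize_shift) (rule ET_img, use ln in simp)
    then show ?thesis unfolding staircase_shaped_def N by (intro exI[of _ "n - length \<alpha> + 1"]) simp
  next
    case 4
    have "normalize (XS {a..b}) = E_shape (b - a + 2)"
      unfolding case4[OF 4(1) ab(2) 4(2)] by (rule normalize_shift) (rule E_img, simp)
    then show ?thesis unfolding staircase_shaped_def N by (intro exI[of _ "b - a + 2"]) simp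
  next
    case 5
    have "normalize (XS {a..b}) = OT_shape (n - a + 1)"
      unfolding case5[OF 5(1) ab(2) 5(2)] by (rule normalize_shift) (rule OT_img, use ab in simp)
    then show ?thesis unfolding staircase_shaped_def N by (intro exI[of _ "n - a + 1"]) simp
  qed
qed

definition R :: "nat \<Rightarrow> nat set" where
  "R j = {i. length \<alpha> < i \<and> i \<le> n \<and> (i = j \<or> i = j + 1)}"

lemma card_R: "j \<le> n \<Longrightarrow> card (R j) = cval n (length \<alpha>) j"
proof -
  assume jn: "j \<le> n"
  consider "j < length \<alpha>" | "j = length \<alpha>" | "length \<alpha> < j" "j = n" | "length \<alpha> < j" "j < n"
    using jn by linarith
  then show ?thesis
  proof cases
    case 1
    then have "R j = {}" unfolding R_def by auto
    then show ?thesis using 1 unfolding cval_def by simp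
  next
    case 2
    then have "R j = {j + 1}" unfolding R_def using ln by auto
    then show ?thesis using 2 unfolding cval_def by simp
  next
    case 3
    then have "R j = {j}" unfolding R_def by auto
    then show ?thesis using 3 unfolding cval_def by simp
  next
    case 4
    then have "R j = {j, j + 1}" unfolding R_def by auto
    then show ?thesis using 4 unfolding cval_def by simp
  qed
qed

lemma card_sub:
  assumes P: "P \<subseteq> {1..n} - set \<alpha>"
  shows "card (relabel \<alpha> ` XS P) = (\<Sum>p\<in>P. cval n (length \<alpha>) p)"
proof -
  have inj: "inj_on (relabel \<alpha>) (XS P)"
    using relabel_bij XS_sub[OF P] unfolding bij_betw_def by (blast intro: inj_on_subset)
  have X: "XS P = (\<lambda>(j, i). (i, j)) ` (SIGMA j:P. R j)" unfolding XS_def R_def by auto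
  have inj2: "inj_on (\<lambda>(j, i). (i, j)) (SIGMA j:P. R j)" by (auto simp: inj_on_def)
  have fP: "finite P" using P finite_subset by blast
  have fR: "\<forall>j\<in>P. finite (R j)" unfolding R_def by auto
  have "card (relabel \<alpha> ` XS P) = card (XS P)" by (rule card_image[OF inj])
  also have "\<dots> = card (SIGMA j:P. R j)" unfolding X by (rule card_image[OF inj2])
  also have "\<dots> = (\<Sum>j\<in>P. card (R j))" using fP fR by simp
  also have "\<dots> = (\<Sum>p\<in>P. cval n (length \<alpha>) p)" using P card_R by (intro sum.cong) auto
  finally show ?thesis .
qed

lemma disj_run:
  assumes "run a b" "run c d" "{a..b} \<noteq> {c..d}" "a \<le> c"
  shows "disjoint_boards (sub_board n \<alpha> {a..b}) (sub_board n \<alpha> {c..d})"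
  unfolding disjoint_boards_def sub_board_eq[OF run_in[OF assms(1)]] sub_board_eq[OF run_in[OF assms(2)]]
proof (intro ballI)
  have sep: "b + 2 \<le> c" by (rule runs_sep[OF assms])
  fix s t assume s: "s \<in> relabel \<alpha> ` XS {a..b}" and t: "t \<in> relabel \<alpha> ` XS {c..d}"
  then obtain x y where x: "x \<in> XS {a..b}" "s = relabel \<alpha> x" and y: "y \<in> XS {c..d}" "t = relabel \<alpha> y" by blast
  obtain i j where ij: "x = (i, j)" "j \<in> {a..b}" "length \<alpha> < i" "i \<le> n" "i = j \<or> i = j + 1"
    using x(1) by (rule XS_memE)
  obtain i' j' where ij': "y = (i', j')" "j' \<in> {c..d}" "length \<alpha> < i'" "i' \<le> n" "i' = j' \<or> i' = j' + 1"
    using y(1) by (rule XS_memE)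
  have "i < i'" "j < j'" using ij ij' sep by auto
  moreover have "j \<notin> set \<alpha>" "j' \<notin> set \<alpha>" using ij(2) ij'(2) run_sub[OF assms(1)] run_sub[OF assms(2)] by auto
  ultimately have "col j < col j'" "i - length \<alpha> < i' - length \<alpha>" using col_mono ij(3) by auto
  then show "fst s \<noteq> fst t \<and> snd s \<noteq> snd t" unfolding x(2) y(2) ij(1) ij'(1) relabel_eq by simp
qed

lemma disj_sym: "disjoint_boards X Y \<Longrightarrow> disjoint_boards Y X"
  unfolding disjoint_boards_def by metis

lemma part2:
  assumes "P \<in> runs n \<alpha>" "Q \<in> runs n \<alpha>" "P \<noteq> Q"
  shows "disjoint_boards (sub_board n \<alpha> P) (sub_board n \<alpha> Q)"
proof -
  obtain a b where P: "P = {a..b}" "run a b" using assms(1) unfolding runs_iff by blast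
  obtain c d where Q: "Q = {c..d}" "run c d" using assms(2) unfolding runs_iff by blast
  show ?thesis
  proof (cases "a \<le> c")
    case True
    then show ?thesis using disj_run[OF P(2) Q(2)] assms(3) P Q by simp
  next
    case False
    then have "disjoint_boards (sub_board n \<alpha> Q) (sub_board n \<alpha> P)"
      using disj_run[OF Q(2) P(2)] assms(3) P Q by auto
    then show ?thesis by (rule disj_sym)
  qed
qed

lemma part3:
  assumes "P \<in> runs n \<alpha>"
  shows "staircase_shaped (sub_board n \<alpha> P) \<and> card (sub_board n \<alpha> P) = (\<Sum>p\<in>P. cval n (length \<alpha>) p)"
proof -
  obtain a b where P: "P = {a..b}" "run a b" using assms unfolding runs_iff by blast
  show ?thesis using staircase_run[OF P(2)] card_sub[OF run_sub[OF P(2)]] sub_board_eq[OF assms] P(1) by simp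
qed

end


theorem mainTheorem9:
  fixes n :: nat and \<alpha> :: "nat list"
  assumes "n \<ge> 3" and "valid_prefix n \<alpha>" and "1 \<le> length \<alpha>" and "length \<alpha> < n"
  shows "derived_board_compl n \<alpha> = (\<Union>P\<in>runs n \<alpha>. sub_board n \<alpha> P)
    \<and> (\<forall>P\<in>runs n \<alpha>. \<forall>Q\<in>runs n \<alpha>. P \<noteq> Q \<longrightarrow> disjoint_boards (sub_board n \<alpha> P) (sub_board n \<alpha> Q))
    \<and> (\<forall>P\<in>runs n \<alpha>. staircase_shaped (sub_board n \<alpha> P)
          \<and> card (sub_board n \<alpha> P) = (\<Sum>p\<in>P. cval n (length \<alpha>) p))
    \<and> image_mset (\<lambda>P. card (sub_board n \<alpha> P)) (mset_set (runs n \<alpha>))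
        = image_mset (\<lambda>P. \<Sum>p\<in>P. cval n (length \<alpha>) p) (mset_set (runs n \<alpha>))"
proof -
  obtain \<pi> where pi: "menage_perm n \<pi>" "\<alpha> = map \<pi> [1..<length \<alpha> + 1]"
    using assms(2) unfolding valid_prefix_def by blast
  have perm: "\<pi> permutes {1..n}" using pi(1) unfolding menage_perm_def by blast
  have "distinct \<alpha>"
  proof -
    have "inj_on \<pi> (set [1..<length \<alpha> + 1])" using permutes_inj[OF perm] by (rule inj_on_subset) simp
    then show ?thesis by (subst pi(2)) (simp add: distinct_map)
  qed
  moreover have "set \<alpha> \<subseteq> {1..n}"
  proof
    fix x assume "x \<in> set \<alpha>"
    have "set \<alpha> = \<pi> ` {1..<length \<alpha> + 1}" using arg_cong[OF pi(2), of set] by (simp only: set_map set_upt)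
    then obtain i where "i \<in> {1..<length \<alpha> + 1}" "x = \<pi> i" using \<open>x \<in> set \<alpha>\<close> by blast
    then show "x \<in> {1..n}" using permutes_in_image[OF perm, of i] assms(4) by auto
  qed
  ultimately interpret L n \<alpha> using assms by unfold_locales auto
  have p3: "\<forall>P\<in>runs n \<alpha>. staircase_shaped (sub_board n \<alpha> P)
          \<and> card (sub_board n \<alpha> P) = (\<Sum>p\<in>P. cval n (length \<alpha>) p)" using part3 by blast
  have p4: "image_mset (\<lambda>P. card (sub_board n \<alpha> P)) (mset_set (runs n \<alpha>))
        = image_mset (\<lambda>P. \<Sum>p\<in>P. cval n (length \<alpha>) p) (mset_set (runs n \<alpha>))"
  proof (cases "finite (runs n \<alpha>)")
    case True
    then show ?thesis using p3 by (intro image_mset_cong) simp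
  next
    case False
    then show ?thesis by simp
  qed
  show ?thesis using part1 part2 p3 p4 by blast
qed

end
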